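(* Let $N\ge2$, $t,r\ge1$, $m=t+r<N$, $K\ge N$, and let $n_0=K-(N-t)+1$. Fix $y\in(0,1]$ and, for $s\ge0$, consider the family of densities on $(0,1]$ $$g_s(x)=f_\beta(x;n_0,r,0)\,e^{-s xy}\sum_{k=0}^{n_0}\binom{n_0}{k}\frac{(r-1)!}{(r+k-1)!}[s\,y(1-x)]^k,$$ which is the conditional pdf of $p_1$ given $p_2=y$ when $\mathrm{SINR}=s$ (with $s=0$ corresponding to $H_0$). Then for every $s>0$ the likelihood ratio $g_s(x)/g_0(x)$ is a nonincreasing function of $x\in(0,1]$; consequently, conditionally on $p_2$, the test that decides $H_1$ when $p_1<\eta$ (equivalently, when $(1-p_1)/p_1>\eta'$) is uniformly most powerful for testing $\mathrm{SINR}=0$ against $\mathrm{SINR}>0$ based on $p_1$.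
   Context: $f_\beta(x;n,m,0)=\frac{(n+m-1)!}{(n-1)!(m-1)!}x^{n-1}(1-x)^{m-1}$ is the complex central beta pdf. $p_1=1/\bigl(1+\frac{m_1}{1+m_2}\bigr)$, $p_2=1/(1+m_2)$ where $m_1=\mathbf{z}_{2.3}^\dagger\mathbf{S}_{2.3}^{-1}\mathbf{z}_{2.3}$, $m_2=\mathbf{z}_3^\dagger\mathbf{S}_{33}^{-1}\mathbf{z}_3$, for the primary vector $\mathbf{z}\in\mathbb{C}^N$ partitioned into blocks of sizes $t,r,N-m$ and sample matrix $\mathbf{S}$ partitioned conformably, $\mathbf{z}_{2.3}=\mathbf{z}_2-\mathbf{S}_{23}\mathbf{S}_{33}^{-1}\mathbf{z}_3$, $\mathbf{S}_{2.3}=\mathbf{S}_{22}-\mathbf{S}_{23}\mathbf{S}_{33}^{-1}\mathbf{S}_{32}$; $(p_1,p_2)$ is the (transformed) maximal invariant of the adaptive subspace detection problem with structured interference, whose second component $p_2$ has the same distribution under both hypotheses. *)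

theory Defs
  imports "HOL-Analysis.Analysis"
begin

definition fbeta :: "nat \<Rightarrow> nat \<Rightarrow> real \<Rightarrow> real" where
  "fbeta n m x = fact (n + m - 1) / (fact (n - 1) * fact (m - 1)) * x ^ (n - 1) * (1 - x) ^ (m - 1)"

definition gdens :: "nat \<Rightarrow> nat \<Rightarrow> real \<Rightarrow> real \<Rightarrow> real \<Rightarrow> real" where
  "gdens n0 r y s x = fbeta n0 r x * exp (- s * x * y) *
     (\<Sum>k = 0..n0. real (n0 choose k) * (fact (r - 1) / fact (r + k - 1)) * (s * y * (1 - x)) ^ k)"

end

theory Submission
  imports Defs
begin

definition PP :: "nat \<Rightarrow> nat \<Rightarrow> real \<Rightarrow> real \<Rightarrow> real \<Rightarrow> real" where
  "PP n0 r y s x = (\<Sum>k = 0..n0. real (n0 choose k) * (fact (r - 1) / fact (r + k - 1)) * (s * y * (1 - x)) ^ k)"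

definition QQ :: "nat \<Rightarrow> nat \<Rightarrow> real \<Rightarrow> real \<Rightarrow> real \<Rightarrow> real" where
  "QQ n0 r y s x = exp (- s * x * y) * PP n0 r y s x"

lemma gdens_QQ: "gdens n0 r y s x = fbeta n0 r x * QQ n0 r y s x"
  unfolding gdens_def QQ_def PP_def by simp

lemma gdens0: "gdens n0 r y 0 x = fbeta n0 r x"
proof -
  have "(\<Sum>k = 0..n0. real (n0 choose k) * (fact (r - 1) / fact (r + k - 1)) * (0 * y * (1 - x)) ^ k)
     = (\<Sum>k = 0..n0. if k = 0 then 1 else 0)"
    by (rule sum.cong) auto
  also have "\<dots> = 1" by simp
  finally show ?thesis unfolding gdens_def by simp
qed

lemma fbeta_nonneg: "0 \<le> x \<Longrightarrow> x \<le> 1 \<Longrightarrow> 0 \<le> fbeta n r x"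
  unfolding fbeta_def by (intro mult_nonneg_nonneg divide_nonneg_nonneg) auto

lemma fbeta_pos: "0 < x \<Longrightarrow> x < 1 \<Longrightarrow> 0 < fbeta n r x"
  unfolding fbeta_def by (intro mult_pos_pos divide_pos_pos) auto

lemma PP_nonneg: "0 \<le> s \<Longrightarrow> 0 \<le> y \<Longrightarrow> x \<le> 1 \<Longrightarrow> 0 \<le> PP n0 r y s x"
  unfolding PP_def by (intro sum_nonneg mult_nonneg_nonneg divide_nonneg_nonneg zero_le_power) auto

lemma QQ_nonneg: "0 \<le> s \<Longrightarrow> 0 \<le> y \<Longrightarrow> x \<le> 1 \<Longrightarrow> 0 \<le> QQ n0 r y s x"
  unfolding QQ_def using PP_nonneg by simp

lemma PP_anti: "0 \<le> s \<Longrightarrow> 0 \<le> y \<Longrightarrow> x \<le> x' \<Longrightarrow> x' \<le> 1 \<Longrightarrow> PP n0 r y s x' \<le> PP n0 r y s x"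
  unfolding PP_def
  by (intro sum_mono mult_left_mono power_mono mult_nonneg_nonneg divide_nonneg_nonneg) auto

lemma QQ_anti: assumes "0 \<le> s" "0 \<le> y" "x \<le> x'" "x' \<le> 1"
  shows "QQ n0 r y s x' \<le> QQ n0 r y s x"
  unfolding QQ_def
proof (rule mult_mono)
  have "s * x * y \<le> s * x' * y" using assms by (intro mult_right_mono mult_left_mono) auto
  then show "exp (- s * x' * y) \<le> exp (- s * x * y)" by simp
qed (use assms PP_anti PP_nonneg in auto)

lemma gdens_cont: "continuous_on UNIV (gdens n0 r y s)"
  unfolding gdens_def fbeta_def by (intro continuous_intros)

lemma gdens_meas[measurable]: "gdens n0 r y s \<in> borel_measurable borel"
  by (rule borel_measurable_continuous_onI[OF gdens_cont])

lemma gdens_bnd: "\<exists>B. \<forall>x\<in>{0..1}. \<bar>gdens n0 r y s x\<bar> \<le> B"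
proof -
  have "compact (gdens n0 r y s ` {0..1})"
    by (rule compact_continuous_image) (auto intro: continuous_on_subset[OF gdens_cont])
  then have "bounded (gdens n0 r y s ` {0..1})" by (rule compact_imp_bounded)
  then show ?thesis unfolding bounded_real by auto
qed

lemma bnd_int:
  fixes h :: "real \<Rightarrow> real" and B :: real
  assumes "h \<in> borel_measurable lborel" "\<forall>x\<in>{0<..1}. \<bar>h x\<bar> \<le> B"
  shows "set_integrable lborel {0<..1::real} h"
  unfolding set_integrable_def
  by (rule integrableI_bounded_set_indicator[where B=B]) (use assms in auto)

lemma L_eq: "gdens n0 r y s x / gdens n0 r y 0 x = (if fbeta n0 r x = 0 then 0 else QQ n0 r y s x)"
  by (simp only: gdens0 gdens_QQ[of n0 r y s x]) simp

lemma L_props: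
  assumes "0 < s" "0 < y"
  shows "antimono_on {0<..1} (\<lambda>x. gdens n0 r y s x / gdens n0 r y 0 x)"
    and "\<And>x. x \<in> {0<..1} \<Longrightarrow> 0 \<le> gdens n0 r y s x / gdens n0 r y 0 x"
    and "\<And>x. x \<in> {0<..1} \<Longrightarrow> gdens n0 r y s x / gdens n0 r y 0 x \<le> QQ n0 r y s 0"
proof -
  show "antimono_on {0<..1} (\<lambda>x. gdens n0 r y s x / gdens n0 r y 0 x)"
  proof (rule monotone_onI)
    fix x x' :: real assume xA: "x \<in> {0<..1}" and x'A: "x' \<in> {0<..1}" and le: "x \<le> x'"
    show "gdens n0 r y s x' / gdens n0 r y 0 x' \<le> gdens n0 r y s x / gdens n0 r y 0 x"
    proof (cases "x = x'")
      case False
      then have "x < 1" using le x'A by auto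
      then have "fbeta n0 r x \<noteq> 0" using fbeta_pos[of x n0 r] xA by auto
      then have Lx: "gdens n0 r y s x / gdens n0 r y 0 x = QQ n0 r y s x" by (simp add: L_eq)
      have "gdens n0 r y s x' / gdens n0 r y 0 x' \<le> QQ n0 r y s x'"
        using QQ_nonneg[of s y x' n0 r] assms x'A by (simp add: L_eq)
      also have "\<dots> \<le> QQ n0 r y s x" using QQ_anti[of s y x x' n0 r] assms le x'A by auto
      finally show ?thesis using Lx by simp
    qed simp
  qed
  fix x :: real assume xA: "x \<in> {0<..1}"
  show "0 \<le> gdens n0 r y s x / gdens n0 r y 0 x"
    using QQ_nonneg[of s y x n0 r] assms xA by (simp add: L_eq)
  have "gdens n0 r y s x / gdens n0 r y 0 x \<le> QQ n0 r y s x"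
    using QQ_nonneg[of s y x n0 r] assms xA by (simp add: L_eq)
  also have "\<dots> \<le> QQ n0 r y s 0" using QQ_anti[of s y 0 x n0 r] assms xA by auto
  finally show "gdens n0 r y s x / gdens n0 r y 0 x \<le> QQ n0 r y s 0" .
qed

lemma gs_L: "gdens n0 r y s x = (gdens n0 r y s x / gdens n0 r y 0 x) * gdens n0 r y 0 x"
  by (simp only: gdens0 gdens_QQ[of n0 r y s x]) simp

lemma int_w:
  fixes w :: "real \<Rightarrow> real"
  assumes [measurable]: "w \<in> borel_measurable lborel" and w1: "\<forall>x. \<bar>w x\<bar> \<le> 1"
  shows "set_integrable lborel {0<..1::real} (\<lambda>x. w x * gdens n0 r y s x)"
proof -
  obtain B where B: "\<forall>x\<in>{0..1}. \<bar>gdens n0 r y s x\<bar> \<le> B" using gdens_bnd by blast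
  show ?thesis
  proof (rule bnd_int[where B=B])
    show "(\<lambda>x. w x * gdens n0 r y s x) \<in> borel_measurable lborel" by measurable
    show "\<forall>x\<in>{0<..1}. \<bar>w x * gdens n0 r y s x\<bar> \<le> B"
    proof
      fix x :: real assume "x \<in> {0<..1}"
      then have "\<bar>gdens n0 r y s x\<bar> \<le> B" using B by auto
      then have "\<bar>w x\<bar> * \<bar>gdens n0 r y s x\<bar> \<le> 1 * B"
        using w1 by (intro mult_mono) auto
      then show "\<bar>w x * gdens n0 r y s x\<bar> \<le> B" by (simp add: abs_mult)
    qed
  qed
qed

lemma NP:
  fixes \<phi> :: "real \<Rightarrow> real" and \<eta> s y :: real
  assumes s: "0 < s" and y: "0 < y"
    and [measurable]: "\<phi> \<in> borel_measurable lborel" and phi: "\<forall>x. 0 \<le> \<phi> x \<and> \<phi> x \<le> 1"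
    and hyp: "(LBINT x:{0<..1}. \<phi> x * gdens n0 r y 0 x) \<le> (LBINT x:{0<..<\<eta>} \<inter> {0<..1}. gdens n0 r y 0 x)"
  shows "(LBINT x:{0<..1}. \<phi> x * gdens n0 r y s x) \<le> (LBINT x:{0<..<\<eta>} \<inter> {0<..1}. gdens n0 r y s x)"
proof -
  define A :: "real set" where "A = {0<..1}"
  define \<psi> :: "real \<Rightarrow> real" where "\<psi> = indicator {0<..<\<eta>}"
  define L where "L = (\<lambda>x. gdens n0 r y s x / gdens n0 r y 0 x)"
  have conv: "(LBINT x:{0<..<\<eta>} \<inter> {0<..1}. g x) = (LBINT x:A. \<psi> x * g x)" for g :: "real \<Rightarrow> real"
    unfolding set_lebesgue_integral_def A_def \<psi>_def
    by (rule Bochner_Integration.integral_cong) (auto simp: indicator_inter_arith)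
  have [measurable]: "\<psi> \<in> borel_measurable lborel" unfolding \<psi>_def by measurable
  have ipsi: "set_integrable lborel A (\<lambda>x. \<psi> x * gdens n0 r y s' x)" for s'
    unfolding A_def by (rule int_w) (auto simp: \<psi>_def)
  have iphi: "set_integrable lborel A (\<lambda>x. \<phi> x * gdens n0 r y s' x)" for s'
    unfolding A_def by (rule int_w) (use phi in auto)
  define c where "c = (if \<eta> \<le> 0 then QQ n0 r y s 0 else if \<eta> \<le> 1 then L \<eta> else 0)"
  have Lp1: "antimono_on A L" unfolding L_def A_def by (rule L_props(1)[OF s y])
  have Lp2: "\<And>x. x \<in> A \<Longrightarrow> 0 \<le> L x" unfolding L_def A_def by (rule L_props(2)[OF s y])
  have Lp3: "\<And>x. x \<in> A \<Longrightarrow> L x \<le> QQ n0 r y s 0" unfolding L_def A_def by (rule L_props(3)[OF s y])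
  note Lp = Lp1 Lp2 Lp3
  have c0: "0 \<le> c"
    unfolding c_def using QQ_nonneg[of s y 0 n0 r] s y Lp(2)[of \<eta>] by (auto simp: A_def)
  have pw: "c * (\<psi> x * gdens n0 r y 0 x - \<phi> x * gdens n0 r y 0 x)
      \<le> \<psi> x * gdens n0 r y s x - \<phi> x * gdens n0 r y s x" if xA: "x \<in> A" for x
  proof -
    define l where "l = L x"
    have e: "gdens n0 r y s x = l * gdens n0 r y 0 x" unfolding l_def L_def by (rule gs_L)
    have g0: "0 \<le> gdens n0 r y 0 x" using xA fbeta_nonneg[of x n0 r] by (simp add: gdens0 A_def)
    have key: "0 \<le> (\<psi> x - \<phi> x) * (l - c)"
    proof (cases "\<eta> \<le> 0")
      case True
      then have "\<psi> x = 0" using xA by (auto simp: \<psi>_def A_def)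
      moreover have "l \<le> c" using True Lp(3)[OF xA] by (simp add: c_def l_def)
      ultimately show ?thesis using phi by (simp add: mult_nonneg_nonneg mult_nonneg_nonpos)
    next
      case F: False
      show ?thesis
      proof (cases "\<eta> \<le> 1")
        case True
        then have eA: "\<eta> \<in> A" using F by (auto simp: A_def)
        have cL: "c = L \<eta>" using F True by (simp add: c_def)
        show ?thesis
        proof (cases "x < \<eta>")
          case True
          then have "\<psi> x = 1" using xA by (auto simp: \<psi>_def A_def)
          moreover have "L \<eta> \<le> l" unfolding l_def
            using monotone_onD[OF Lp(1) xA eA] True by auto
          ultimately show ?thesis using phi cL by (simp add: mult_nonneg_nonneg mult_nonneg_nonpos)
        next
          case False
          then have "\<psi> x = 0" by (auto simp: \<psi>_def)
          moreover have "l \<le> L \<eta>" unfolding l_def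
            using monotone_onD[OF Lp(1) eA xA] False by auto
          ultimately show ?thesis using phi cL by (simp add: mult_nonneg_nonneg mult_nonneg_nonpos)
        qed
      next
        case False
        then have "\<psi> x = 1" using xA by (auto simp: \<psi>_def A_def)
        moreover have "c = 0" using F False by (simp add: c_def)
        moreover have "0 \<le> l" using Lp(2)[OF xA] by (simp add: l_def)
        ultimately show ?thesis using phi by (simp add: mult_nonneg_nonneg mult_nonneg_nonpos)
      qed
    qed
    have "0 \<le> gdens n0 r y 0 x * ((\<psi> x - \<phi> x) * (l - c))"
      using g0 key by (rule mult_nonneg_nonneg)
    then show ?thesis unfolding e by (simp add: algebra_simps)
  qed
  have "0 \<le> c * ((LBINT x:A. \<psi> x * gdens n0 r y 0 x) - (LBINT x:A. \<phi> x * gdens n0 r y 0 x))"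
    using c0 hyp conv[of "gdens n0 r y 0"] by (simp add: A_def)
  also have "\<dots> = (LBINT x:A. c * (\<psi> x * gdens n0 r y 0 x - \<phi> x * gdens n0 r y 0 x))"
    using set_integral_diff(2)[OF ipsi iphi] by simp
  also have "\<dots> \<le> (LBINT x:A. \<psi> x * gdens n0 r y s x - \<phi> x * gdens n0 r y s x)"
    by (rule set_integral_mono) (use pw ipsi iphi in auto)
  also have "\<dots> = (LBINT x:A. \<psi> x * gdens n0 r y s x) - (LBINT x:A. \<phi> x * gdens n0 r y s x)"
    using set_integral_diff(2)[OF ipsi iphi] by simp
  finally show ?thesis using conv[of "gdens n0 r y s"] by (simp add: A_def)
qed

theorem mainTheorem7:
  fixes N t r K :: nat and y :: real
  assumes "N \<ge> 2" and "t \<ge> 1" and "r \<ge> 1" and "t + r < N" and "K \<ge> N"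
    and "0 < y" and "y \<le> 1"
  defines "n0 \<equiv> K - (N - t) + 1"
  shows "(\<forall>s>0. antimono_on {0<..1} (\<lambda>x. gdens n0 r y s x / gdens n0 r y 0 x))
    \<and> (\<forall>\<eta>::real. \<forall>\<phi>::real \<Rightarrow> real.
          \<phi> \<in> borel_measurable lborel \<and> (\<forall>x. 0 \<le> \<phi> x \<and> \<phi> x \<le> 1) \<and>
          (LBINT x:{0<..1}. \<phi> x * gdens n0 r y 0 x) \<le> (LBINT x:{0<..<\<eta>} \<inter> {0<..1}. gdens n0 r y 0 x)
          \<longrightarrow> (\<forall>s>0. (LBINT x:{0<..1}. \<phi> x * gdens n0 r y s x)
                        \<le> (LBINT x:{0<..<\<eta>} \<inter> {0<..1}. gdens n0 r y s x)))"
  using L_props(1)[OF _ \<open>0 < y\<close>] NP[OF _ \<open>0 < y\<close>] by blast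

end
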